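(* Let $f:(0,\infty)\to(0,\infty)$ be a function which is constant on the interval $(0,4)$ and such that, for some positive real number $K$, $f(x)=K\left(\frac{x}{2}-1\right)f\left(\frac{x}{2}-1\right)$ for all $x\ge4$. Then there exists a positive real number $c$ such that $f(x)>x^{\log_2(x)/2-c}$ for every sufficiently large real number $x$. *)

theory Defs
  imports "HOL-Analysis.Analysis"
begin

end

theory Submission
  imports Defs
begin

theorem lemma8p6:
  fixes f :: "real \<Rightarrow> real" and K :: real
  assumes pos: "\<forall>x>0. f x > 0"
    and const: "\<exists>a. \<forall>x\<in>{0<..<4}. f x = a"
    and K_pos: "K > 0"
    and rec: "\<forall>x\<ge>4. f x = K * (x / 2 - 1) * f (x / 2 - 1)"
  shows "\<exists>c>0. \<forall>\<^sub>F x in at_top. f x > x powr (log 2 x / 2 - c)"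
proof -
  obtain a where a: "\<forall>x\<in>{0<..<4}. f x = a" using const by blast
  have apos: "a > 0" proof -
    have "f 1 = a" using a by simp
    thus ?thesis using pos by force
  qed
  define c where "c = max 0 (log 2 (6/K))"
  define d :: real where "d = 5"
  define Q where "Q = (\<lambda>t::real. t^2/2 - c*t - d)"
  have c0: "c \<ge> 0" unfolding c_def by simp
  have cK: "2 powr (-c) \<le> K/6"
  proof -
    have "log 2 (6/K) \<le> c" unfolding c_def by simp
    hence "2 powr (- c) \<le> 2 powr (- log 2 (6/K))" by simp
    also have "\<dots> = K/6" using K_pos by (simp add: powr_minus_divide)
    finally show ?thesis .
  qed
  have main: "\<forall>x. 0 < x \<and> x < 2^(n+2) \<longrightarrow> a * 2 powr Q (log 2 (x+2)) \<le> f x" for n :: nat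
  proof (induction n)
    case 0
    show ?case
    proof (intro allI impI)
      fix x :: real assume x: "0 < x \<and> x < 2^(0+2)"
      have fx: "f x = a" using a x by auto
      have T1: "log 2 (x+2) > 0" using x by simp
      have T3: "log 2 (x+2) < 3"
      proof -
        have "log 2 (x+2) < log 2 8" using x by (intro log_less) auto
        also have "log 2 8 = (3::real)"
        proof -
          have "log 2 (2 powr (3::real)) = 3" by (rule log_powr_cancel) auto
          thus ?thesis by simp
        qed
        finally show ?thesis .
      qed
      have "(log 2 (x+2))^2 \<le> 3^2" using T1 T3 by (intro power_mono) auto
      moreover have "c * log 2 (x+2) \<ge> 0" using c0 T1 by simp
      ultimately have "Q (log 2 (x+2)) \<le> 0" unfolding Q_def d_def
        by (simp add: power2_eq_square)
      hence "2 powr Q (log 2 (x+2)) \<le> 2 powr (0::real)" by (intro powr_mono) auto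
      hence "2 powr Q (log 2 (x+2)) \<le> 1" by simp
      thus "a * 2 powr Q (log 2 (x+2)) \<le> f x" using fx apos by simp
    qed
  next
    case (Suc n)
    show ?case
    proof (intro allI impI)
      fix x :: real assume x: "0 < x \<and> x < 2^(Suc n+2)"
      show "a * 2 powr Q (log 2 (x+2)) \<le> f x"
      proof (cases "x < 4")
        case True
        have "(2::real)^2 \<le> 2^(n+2)" by (rule power_increasing) auto
        hence h4: "(4::real) \<le> 2^(n+2)" by simp
        have "x < 2^(n+2)" using h4 True by linarith
        then show ?thesis using Suc x by blast
      next
        case False
        define y where "y = x/2 - 1"
        have y1: "y \<ge> 1" using False unfolding y_def by simp
        have yb: "y < 2^(n+2)" using x unfolding y_def by simp
        have IH: "a * 2 powr Q (log 2 (y+2)) \<le> f y" using Suc y1 yb by simp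
        have fx: "f x = K * y * f y" using rec False unfolding y_def by simp
        define T where "T = log 2 (x+2)"
        have z: "x + 2 = 2 powr T" unfolding T_def using x by simp
        have Ty: "log 2 (y+2) = T - 1"
        proof -
          have "y + 2 = (x+2)/2" unfolding y_def by simp
          hence "log 2 (y+2) = log 2 ((x+2)/2)" by (rule arg_cong)
          also have "\<dots> = log 2 (x+2) - log 2 2" using x by (intro log_divide_pos) auto
          finally show ?thesis unfolding T_def by simp
        qed
        have QT: "Q T = Q (T-1) + (T - 1/2 - c)" unfolding Q_def
          by (simp add: power2_eq_square field_simps)
        have ylow: "y \<ge> 2 powr T / 6" using y1 z unfolding y_def by simp
        have "2 powr (T - 1/2 - c) \<le> 2 powr (T - c)" by simp
        also have "\<dots> = 2 powr T * 2 powr (-c)" by (simp add: powr_add[symmetric])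
        also have "\<dots> \<le> 2 powr T * (K/6)" using cK by (intro mult_left_mono) auto
        also have "\<dots> \<le> K * y" using ylow K_pos by (simp add: mult.commute)
        finally have key: "2 powr (T - 1/2 - c) \<le> K * y" .
        have "a * 2 powr Q T = a * 2 powr Q (T-1) * 2 powr (T - 1/2 - c)"
          using QT by (simp add: powr_add)
        also have "\<dots> \<le> a * 2 powr Q (T-1) * (K * y)"
          using key apos by (intro mult_left_mono) auto
        also have "\<dots> \<le> f y * (K * y)"
          using IH Ty K_pos y1 by (intro mult_right_mono) auto
        also have "\<dots> = f x" using fx by simp
        finally show ?thesis unfolding T_def .
      qed
    qed
  qed
  have lower: "a * 2 powr Q (log 2 (x+2)) \<le> f x" if "x > 0" for x
  proof -
    obtain n where "x < 2^n" using real_arch_pow[of 2 x] by auto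
    hence "x < 2^(n+2)" by (smt (verit) one_le_numeral power_increasing le_add1)
    thus ?thesis using main that by blast
  qed
  show ?thesis
  proof (intro exI[of _ "c+1"] conjI)
    show "c + 1 > 0" using c0 by simp
    have ev: "\<forall>\<^sub>F x in at_top. x \<ge> 2 \<and> x > 2 powr (c + d - log 2 a)"
      by (intro eventually_conj eventually_ge_at_top eventually_gt_at_top)
    show "\<forall>\<^sub>F x in at_top. f x > x powr (log 2 x / 2 - (c+1))"
      using ev
    proof eventually_elim
      case (elim x)
      define L where "L = log 2 x"
      define T where "T = log 2 (x+2)"
      have L1: "L \<ge> 1" unfolding L_def using elim by simp
      have LT: "L \<le> T" unfolding L_def T_def using elim by simp
      have TL: "T \<le> L + 1"
      proof -
        have "x + 2 \<le> 2 * x" using elim by simp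
        hence "T \<le> log 2 (2*x)" unfolding T_def using elim by simp
        also have "\<dots> = L + 1" unfolding L_def using elim by (simp add: log_mult)
        finally show ?thesis .
      qed
      have Lbig: "L > c + d - log 2 a"
      proof -
        have "log 2 (2 powr (c + d - log 2 a)) < log 2 x" using elim by (intro log_less) auto
        thus ?thesis unfolding L_def by simp
      qed
      have sq: "L^2 \<le> T^2" using L1 LT by (intro power_mono) auto
      have cT: "c * T \<le> c * (L+1)" using c0 TL by (intro mult_left_mono) auto
      have ineq: "L * (L/2 - (c+1)) < log 2 a + Q T"
        unfolding Q_def using sq cT Lbig by (simp add: power2_eq_square algebra_simps)
      have "x powr (log 2 x / 2 - (c+1)) = 2 powr (L * (L/2 - (c+1)))"
        unfolding L_def using elim by (simp add: powr_powr[symmetric])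
      also have "\<dots> < 2 powr (log 2 a + Q T)" using ineq by simp
      also have "\<dots> = a * 2 powr Q T" using apos by (simp add: powr_add)
      also have "\<dots> \<le> f x" unfolding T_def using lower elim by simp
      finally show ?case .
    qed
  qed
qed

end
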